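(* (i) A point $(F_1,\dots,F_4,\Phi)\in\mathrm{QPH}(E)$ with $\Phi\ne0$ and $\det\Phi=0$ is not $\beta$-stable for any $\beta\in[0,1)^4$ if and only if $$-\bigl|\{1,2,3,4\}\setminus I_{L(\Phi)}\bigr|\ \ge\ \deg E-2\deg L(\Phi).$$ (ii) A point $(F_1,\dots,F_4,0)$ is not $\beta$-stable for any $\beta\in[0,1)^4$ if and only if there are line subbundles $L,L'\subset E$ with $L\cong\mathcal O(m_1)$, $L'\cong\mathcal O(m_2)$ such that $I_L\cup I_{L'}=\{1,2,3,4\}$.
   Context: Fix $z_1\in\mathbb{CP}^1\setminus\{0,1,\infty\}$, set $z_2=0$, $z_3=1$, $z_4=\infty$, $D=z_1+\dots+z_4$. Let $E\to\mathbb{CP}^1$ be a rank 2 holomorphic bundle of degree $d$, $E\cong\mathcal O(m_1)\oplus\mathcal O(m_2)$, $m_1\ge m_2$. $\mathrm{QPH}(E)$ is the space of tuples $(F_1,\dots,F_4,\Phi)$ where $F_i\subset E|_{z_i}$ are lines and $\Phi\in H^0(\mathrm{End}(E)\otimes K_{\mathbb{CP}^1}(D))$ has nilpotent residues with $F_i\subset\ker\mathrm{Res}_{z_i}\Phi$. A nonzero nilpotent $\Phi$ preserves a unique line subbundle $L(\Phi)$ (saturation of $\ker\Phi$). For a line subbundle $L$, $I_L=\{i:L|_{z_i}=F_i\}$. For $\beta\in[0,1)^4$, $\beta_I=\sum_{i\in I}\beta_i-\sum_{j\notin I}\beta_j$, and $(F,\Phi)$ is $\beta$-stable if $\beta_{I_L}<d-2\deg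 L$ for every $\Phi$-invariant line subbundle $L\subset E$ (every line subbundle if $\Phi=0$). *)

theory Defs
  imports "HOL-Analysis.Analysis" "HOL-Computational_Algebra.Polynomial"
begin

text \<open>
Points of CP^1 are \<open>complex option\<close> (\<open>None\<close> = infinity);
the marked points are z_1 = z1, z_2 = 0, z_3 = 1, z_4 = infinity.
E = O(m1) + O(m2) is trivialised over C by the frame (e1,e2) and over
CP^1 minus 0 by (f1,f2) with f_k = z^(m_k) e_k; fibres of E are \<open>complex^2\<close>
in these frames.  A global section of O(n) is a polynomial of degree \<le> n,
whose value at infinity (in the f-frame) is its coefficient of z^n.
\<close>

definition pt :: "complex \<Rightarrow> nat \<Rightarrow> complex option" where
  "pt z1 i = (if i = 1 then Some z1 else if i = 2 then Some 0
              else if i = 3 then Some 1 else None)"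

definition mdeg :: "int \<Rightarrow> int \<Rightarrow> 2 \<Rightarrow> int" where
  "mdeg m1 m2 i = (if i = 1 then m1 else m2)"

definition icoeff :: "complex poly \<Rightarrow> int \<Rightarrow> complex" where
  "icoeff p j = (if j < 0 then 0 else coeff p (nat j))"

text \<open>\<open>deg_le p n\<close>: p is a global section of O(n) (n may be negative, then p = 0).\<close>
definition deg_le :: "complex poly \<Rightarrow> int \<Rightarrow> bool" where
  "deg_le p n \<longleftrightarrow> p = 0 \<or> int (degree p) \<le> n"

definition cline :: "complex^2 \<Rightarrow> (complex^2) set" where
  "cline v = range (\<lambda>c. c *s v)"

definition is_line :: "(complex^2) set \<Rightarrow> bool" where
  "is_line S \<longleftrightarrow> (\<exists>v. v \<noteq> 0 \<and> S = cline v)"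

text \<open>A line subbundle of degree k is the image of a nowhere vanishing bundle map
O(k) \<rightarrow> E, i.e. a pair s = (s1,s2) of sections of O(m1-k), O(m2-k) without
common zero on CP^1.  \<open>sub_vec\<close> is the value of s at a point (a spanning
vector of the fibre of the subbundle there).\<close>
definition sub_vec :: "int \<Rightarrow> int \<Rightarrow> int \<Rightarrow> (complex poly^2) \<Rightarrow> complex option \<Rightarrow> complex^2" where
  "sub_vec m1 m2 k s x = (case x of
      Some z \<Rightarrow> (\<chi> i. poly (s $ i) z)
    | None \<Rightarrow> (\<chi> i. icoeff (s $ i) (mdeg m1 m2 i - k)))"

definition line_subbundle :: "int \<Rightarrow> int \<Rightarrow> int \<Rightarrow> (complex poly^2) \<Rightarrow> bool" where
  "line_subbundle m1 m2 k s \<longleftrightarrow>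
     (\<forall>i. deg_le (s $ i) (mdeg m1 m2 i - k)) \<and> (\<forall>x. sub_vec m1 m2 k s x \<noteq> 0)"

definition sub_fibre :: "complex \<Rightarrow> int \<Rightarrow> int \<Rightarrow> int \<Rightarrow> (complex poly^2) \<Rightarrow> nat \<Rightarrow> (complex^2) set" where
  "sub_fibre z1 m1 m2 k s i = cline (sub_vec m1 m2 k s (pt z1 i))"

definition IL :: "complex \<Rightarrow> int \<Rightarrow> int \<Rightarrow> (nat \<Rightarrow> (complex^2) set) \<Rightarrow> int \<Rightarrow> (complex poly^2) \<Rightarrow> nat set" where
  "IL z1 m1 m2 F k s = {i \<in> {1..4}. sub_fibre z1 m1 m2 k s i = F i}"

text \<open>Higgs fields: \<Phi> = A(z) \<otimes> dz/(z(z-1)(z-z1)), where A$i$j is a section of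
Hom(O(m_j),O(m_i)) \<otimes> K(D) = O(m_i - m_j + 2).\<close>
definition higgs :: "int \<Rightarrow> int \<Rightarrow> (complex poly^2^2) \<Rightarrow> bool" where
  "higgs m1 m2 A \<longleftrightarrow> (\<forall>i j. deg_le (A $ i $ j) (mdeg m1 m2 i - mdeg m1 m2 j + 2))"

definition denom :: "complex \<Rightarrow> complex poly" where
  "denom z1 = [:0, 1:] * [:-1, 1:] * [:-z1, 1:]"

text \<open>Residue of \<Phi> at a point (finite: A(z)/q'(z); at infinity: minus the
top coefficients, in the f-frame).\<close>
definition res :: "complex \<Rightarrow> int \<Rightarrow> int \<Rightarrow> (complex poly^2^2) \<Rightarrow> complex option \<Rightarrow> complex^2^2" where
  "res z1 m1 m2 A x = (case x of
      Some z \<Rightarrow> (\<chi> i j. poly (A $ i $ j) z / poly (pderiv (denom z1)) z)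
    | None \<Rightarrow> (\<chi> i j. - icoeff (A $ i $ j) (mdeg m1 m2 i - mdeg m1 m2 j + 2)))"

definition QPH :: "complex \<Rightarrow> int \<Rightarrow> int \<Rightarrow> (nat \<Rightarrow> (complex^2) set) \<Rightarrow> (complex poly^2^2) \<Rightarrow> bool" where
  "QPH z1 m1 m2 F A \<longleftrightarrow> higgs m1 m2 A \<and>
     (\<forall>i\<in>{1..4}. is_line (F i) \<and>
        res z1 m1 m2 A (pt z1 i) ** res z1 m1 m2 A (pt z1 i) = 0 \<and>
        (\<forall>v\<in>F i. res z1 m1 m2 A (pt z1 i) *v v = 0))"

definition invariant :: "(complex poly^2^2) \<Rightarrow> (complex poly^2) \<Rightarrow> bool" where
  "invariant A s \<longleftrightarrow> (A *v s) $ 1 * s $ 2 = (A *v s) $ 2 * s $ 1"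

definition beta_ok :: "(nat \<Rightarrow> real) \<Rightarrow> bool" where
  "beta_ok \<beta> \<longleftrightarrow> (\<forall>i\<in>{1..4}. 0 \<le> \<beta> i \<and> \<beta> i < 1)"

definition betaI :: "(nat \<Rightarrow> real) \<Rightarrow> nat set \<Rightarrow> real" where
  "betaI \<beta> I = (\<Sum>i\<in>I. \<beta> i) - (\<Sum>j\<in>{1..4} - I. \<beta> j)"

definition stable :: "complex \<Rightarrow> int \<Rightarrow> int \<Rightarrow> (nat \<Rightarrow> real) \<Rightarrow> (nat \<Rightarrow> (complex^2) set) \<Rightarrow> (complex poly^2^2) \<Rightarrow> bool" where
  "stable z1 m1 m2 \<beta> F A \<longleftrightarrow>
     (\<forall>k s. line_subbundle m1 m2 k s \<and> invariant A s \<longrightarrow>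
        betaI \<beta> (IL z1 m1 m2 F k s) < real_of_int (m1 + m2 - 2 * k))"

end

theory Submission
  imports Defs "HOL-Computational_Algebra.Polynomial_Factorial" "HOL-Computational_Algebra.Field_as_Ring" "HOL-Computational_Algebra.Fundamental_Theorem_Algebra"
begin

lemma vec2_eq: "(v::'a^2) = w \<longleftrightarrow> v$1 = w$1 \<and> v$2 = w$2"
  by (simp add: vec_eq_iff forall_2)

lemma mv2: "((A::'a::comm_ring_1^2^2) *v v)$1 = A$1$1* v$1 + A$1$2* v$2" "((A::'a::comm_ring_1^2^2) *v v)$2 = A$2$1* v$1 + A$2$2* v$2"
  by (simp_all add: matrix_vector_mult_def sum_2)

lemma mm2: "((A::'a::comm_ring_1^2^2) ** B)$i$j = A$i$1*B$1$j + A$i$2*B$2$j"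
  by (simp add: matrix_matrix_mult_def sum_2)

lemma mdeg_simps[simp]: "mdeg m1 m2 1 = m1" "mdeg m1 m2 2 = m2"
  by (simp_all add: mdeg_def)

lemma sub_vec_simps[simp]:
  "sub_vec m1 m2 k s (Some z) $ i = poly (s$i) z"
  "sub_vec m1 m2 k s None $ i = icoeff (s$i) (mdeg m1 m2 i - k)"
  by (simp_all add: sub_vec_def)

lemma deg_le_neg: "deg_le p n \<Longrightarrow> n < 0 \<Longrightarrow> p = 0"
  by (auto simp: deg_le_def)

lemma cline_smult: "c \<noteq> 0 \<Longrightarrow> cline (c *s v) = cline v"
  unfolding cline_def
proof (rule set_eqI, rule iffI)
  fix x assume "c \<noteq> 0" "x \<in> range (\<lambda>d. d *s (c *s v))"
  then show "x \<in> range (\<lambda>d. d *s v)" by (auto simp: scalar_mult_eq_scaleR)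
next
  fix x assume c: "c \<noteq> 0" and "x \<in> range (\<lambda>d. d *s v)"
  then obtain d where "x = d *s v" by auto
  then have "x = (d/c) *s (c *s v)" using c by (simp add: vector_smult_assoc)
  then show "x \<in> range (\<lambda>d. d *s (c *s v))" by blast
qed

lemma in_cline: "v \<in> cline v"
  unfolding cline_def by (metis rangeI vector_smult_lid)

lemma cline_eq_iff:
  fixes v w :: "complex^2"
  assumes "v \<noteq> 0" "w \<noteq> 0"
  shows "cline v = cline w \<longleftrightarrow> v$1* w$2 = v$2* w$1"
proof
  assume "cline v = cline w"
  then have "v \<in> cline w" using in_cline by blast
  then obtain c where "v = c *s w" unfolding cline_def by auto
  then show "v$1* w$2 = v$2* w$1" by simp
next
  assume h: "v$1* w$2 = v$2* w$1"
  have "\<exists>c. c \<noteq> 0 \<and> v = c *s w"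
  proof (cases "w$1 = 0")
    case True
    then have w2: "w$2 \<noteq> 0" using assms(2) by (auto simp: vec2_eq)
    have v1: "v$1 = 0" using h True w2 by simp
    show ?thesis
      apply (rule exI[of _ "v$2 / w$2"])
      using v1 True w2 assms(1) by (auto simp: vec2_eq)
  next
    case False
    show ?thesis
      apply (rule exI[of _ "v$1 / w$1"])
      using h False assms(1) by (auto simp: vec2_eq field_simps)
  qed
  then show "cline v = cline w" using cline_smult by auto
qed

lemma nil2_trace:
  fixes R :: "complex^2^2"
  assumes "R ** R = 0"
  shows "R$1$1 + R$2$2 = 0"
proof -
  have e: "(R ** R)$i$j = 0" for i j using assms by simp
  have a: "R$1$1*R$1$1 + R$1$2*R$2$1 = 0" using e[of 1 1] by (simp add: mm2)
  have b: "R$2$1*R$1$2 + R$2$2*R$2$2 = 0" using e[of 2 2] by (simp add: mm2)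
  have c: "R$1$2*(R$1$1 + R$2$2) = 0" using e[of 1 2] by (simp add: mm2 algebra_simps)
  have d: "R$2$1*(R$1$1 + R$2$2) = 0" using e[of 2 1] by (simp add: mm2 algebra_simps)
  show ?thesis
  proof (rule ccontr)
    assume t: "R$1$1 + R$2$2 \<noteq> 0"
    then have "R$1$2 = 0" "R$2$1 = 0" using c d by auto
    then have "R$1$1 = 0" "R$2$2 = 0" using a b by auto
    then show False using t by simp
  qed
qed

lemma quad_zero:
  fixes p :: "complex poly"
  assumes "degree p \<le> 2" "poly p 0 = 0" "poly p 1 = 0" "poly p z1 = 0" "z1 \<noteq> 0" "z1 \<noteq> 1"
  shows "p = 0"
proof (rule ccontr)
  assume "p \<noteq> 0"
  then have "card {x. poly p x = 0} \<le> degree p" by (rule card_poly_roots_bound)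
  moreover have "{0,1,z1} \<subseteq> {x. poly p x = 0}" using assms by auto
  moreover have "finite {x. poly p x = 0}" using \<open>p \<noteq> 0\<close> poly_roots_finite by blast
  ultimately have "card {0,1,z1::complex} \<le> 2" using assms(1) card_mono by (meson order_trans)
  then show False using assms by auto
qed

lemma pderiv_denom: "poly (pderiv (denom z1)) z = 3*z^2 - 2*(1+z1)*z + z1"
  by (simp add: denom_def pderiv_mult pderiv_pCons algebra_simps power2_eq_square)

lemma trace_zero:
  assumes z: "z1 \<noteq> 0" "z1 \<noteq> 1" and Q: "QPH z1 m1 m2 F A"
  shows "A$1$1 + A$2$2 = 0"
proof -
  let ?T = "A$1$1 + A$2$2"
  have root: "poly ?T z = 0" if i: "i \<in> {1..4}" "pt z1 i = Some z" "poly (pderiv (denom z1)) z \<noteq> 0" for i z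
  proof -
    have "res z1 m1 m2 A (pt z1 i) ** res z1 m1 m2 A (pt z1 i) = 0" using Q i unfolding QPH_def by blast
    then have "res z1 m1 m2 A (Some z)$1$1 + res z1 m1 m2 A (Some z)$2$2 = 0" using i nil2_trace by metis
    then show ?thesis using i(3) by (simp add: res_def add_divide_distrib[symmetric])
  qed
  have "poly ?T z1 = 0" by (rule root[of 1]) (use z in \<open>auto simp: pt_def pderiv_denom algebra_simps power2_eq_square\<close>)
  moreover have "poly ?T 0 = 0" by (rule root[of 2]) (use z in \<open>auto simp: pt_def pderiv_denom\<close>)
  moreover have "poly ?T 1 = 0" by (rule root[of 3]) (use z in \<open>auto simp: pt_def pderiv_denom\<close>)
  moreover have "degree ?T \<le> 2"
  proof -
    have "deg_le (A$i$i) 2" for i using Q unfolding QPH_def higgs_def by (metis add.commute diff_self add_0)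
    then have "degree (A$i$i) \<le> 2" for i unfolding deg_le_def by (metis degree_0 of_nat_le_iff of_nat_numeral zero_le)
    then show ?thesis by (meson degree_add_le)
  qed
  ultimately show ?thesis using quad_zero z by blast
qed

lemma inv_kernel:
  fixes A :: "complex poly^2^2" and s :: "complex poly^2"
  assumes tr: "A$1$1 + A$2$2 = 0" and dt: "det A = 0" and inv: "invariant A s" and s0: "s \<noteq> 0"
  shows "A *v s = 0"
proof -
  define v where "v = A *v s"
  have d: "A$2$2 = - A$1$1"
  proof - have "A$2$2 = (A$1$1 + A$2$2) - A$1$1" by simp then show ?thesis using tr by simp qed
  have "det A = -(A$1$1*A$1$1 + A$1$2*A$2$1)" by (simp add: det_2 d algebra_simps)
  then have dd: "A$1$1*A$1$1 + A$1$2*A$2$1 = 0" using dt by (metis neg_equal_0_iff_equal)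
  have v1: "v$1 = A$1$1* s$1 + A$1$2* s$2" and v2: "v$2 = A$2$1* s$1 + A$2$2* s$2" by (simp_all add: v_def mv2)
  have Av1: "A$1$1* v$1 + A$1$2* v$2 = 0"
  proof -
    have "A$1$1* v$1 + A$1$2* v$2 = (A$1$1*A$1$1 + A$1$2*A$2$1)* s$1" by (simp add: v1 v2 d algebra_simps)
    then show ?thesis using dd by simp
  qed
  have Av2: "A$2$1* v$1 + A$2$2* v$2 = 0"
  proof -
    have "A$2$1* v$1 + A$2$2* v$2 = (A$1$1*A$1$1 + A$1$2*A$2$1)* s$2" by (simp add: v1 v2 d algebra_simps)
    then show ?thesis using dd by simp
  qed
  have par: "v$1 * s$2 = v$2 * s$1" using inv by (simp add: invariant_def v_def)
  have "v$1 = 0 \<and> v$2 = 0"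
  proof (cases "s$1 = 0")
    case False
    have "s$1 * (A$1$1* v$1 + A$1$2* v$2) = A$1$1* s$1* v$1 + A$1$2*(v$2* s$1)" by (simp add: algebra_simps)
    also have "\<dots> = A$1$1* s$1* v$1 + A$1$2*(v$1* s$2)" using par by simp
    also have "\<dots> = v$1 * v$1" by (simp add: v1 algebra_simps)
    finally have "s$1 * (A$1$1* v$1 + A$1$2* v$2) = v$1 * v$1" .
    then have "v$1 = 0" using Av1 by simp
    then show ?thesis using par False by simp
  next
    case True
    then have s2: "s$2 \<noteq> 0" using s0 by (auto simp: vec2_eq)
    have "s$2 * (A$2$1* v$1 + A$2$2* v$2) = A$2$1*(v$1* s$2) + A$2$2* s$2* v$2" by (simp add: algebra_simps)
    also have "\<dots> = A$2$1*(v$2* s$1) + A$2$2* s$2* v$2" using par by simp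
    also have "\<dots> = v$2 * v$2" by (simp add: v2 algebra_simps)
    finally have "s$2 * (A$2$1* v$1 + A$2$2* v$2) = v$2 * v$2" .
    then have "v$2 = 0" using Av2 by simp
    then show ?thesis using par s2 by simp
  qed
  then show ?thesis by (simp add: v_def vec2_eq)
qed

lemma ls_nz: "line_subbundle m1 m2 k s \<Longrightarrow> sub_vec m1 m2 k s x \<noteq> 0"
  by (simp add: line_subbundle_def)

lemma ls_s0: "line_subbundle m1 m2 k s \<Longrightarrow> s \<noteq> 0"
  using ls_nz[of m1 m2 k s "Some 0"] by (auto simp: vec2_eq)

lemma ls_coprime:
  assumes "line_subbundle m1 m2 k s"
  shows "coprime (s$1) (s$2)"
proof (rule ccontr)
  assume nc: "\<not> coprime (s$1) (s$2)"
  let ?g = "gcd (s$1) (s$2)"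
  have "?g \<noteq> 0" using ls_s0[OF assms] by (auto simp: vec2_eq)
  moreover have "\<not> is_unit ?g" using nc by (simp add: coprime_iff_gcd_eq_1 is_unit_gcd)
  ultimately have "degree ?g \<noteq> 0" using is_unit_iff_degree by blast
  then have "\<not> constant (poly ?g)" by (simp add: constant_degree)
  then obtain z where z: "poly ?g z = 0" using fundamental_theorem_of_algebra by blast
  have zz: "[:-z,1:] dvd ?g" using z by (simp add: poly_eq_0_iff_dvd)
  have "poly (s$1) z = 0" using dvd_trans[OF zz gcd_dvd1] by (simp add: poly_eq_0_iff_dvd)
  moreover have "poly (s$2) z = 0" using dvd_trans[OF zz gcd_dvd2] by (simp add: poly_eq_0_iff_dvd)
  ultimately have "sub_vec m1 m2 k s (Some z) = 0" by (simp add: vec2_eq)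
  then show False using ls_nz[OF assms] by blast
qed

lemma par_aux:
  fixes a1 a2 b1 b2 :: "complex poly"
  assumes c1: "coprime a1 a2" and c2: "coprime b1 b2" and nz: "a1 \<noteq> 0" and p: "a1*b2 = a2*b1"
  shows "\<exists>c. c \<noteq> 0 \<and> b1 = smult c a1 \<and> b2 = smult c a2"
proof -
  have "a1 dvd a2*b1" using p by (metis dvd_triv_left)
  then have "a1 dvd b1" using c1 by (simp add: coprime_dvd_mult_right_iff)
  then obtain q where q: "b1 = a1*q" by (auto elim: dvdE)
  have "b1 dvd b2*a1" using p by (metis dvd_triv_left mult.commute)
  then have "b1 dvd a1" using c2 by (simp add: coprime_dvd_mult_right_iff)
  then obtain r where r: "a1 = b1*r" by (auto elim: dvdE)
  have "a1 * 1 = a1 * (q*r)" by (metis q r mult.assoc mult_1_right)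
  then have "q*r = 1" using nz by (metis mult_left_cancel)
  then have "q dvd 1" by (metis dvd_triv_left)
  then obtain c where qc: "q = [:c:]" and "c dvd 1" using is_unit_poly_iff by blast
  then have c0: "c \<noteq> 0" by auto
  have b1: "b1 = smult c a1" using q qc by simp
  have "a1 * b2 = a1 * smult c a2" using p b1 by (simp add: algebra_simps)
  then have "b2 = smult c a2" using nz by (metis mult_left_cancel)
  then show ?thesis using b1 c0 by blast
qed

lemma ls_deg_le: "line_subbundle m1 m2 k s \<Longrightarrow> s$i \<noteq> 0 \<Longrightarrow> int (degree (s$i)) \<le> mdeg m1 m2 i - k"
  by (auto simp: line_subbundle_def deg_le_def)

lemma ls_deg_eq:
  assumes L: "line_subbundle m1 m2 k s"
  shows "\<exists>i. s$i \<noteq> 0 \<and> int (degree (s$i)) = mdeg m1 m2 i - k"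
proof -
  have "sub_vec m1 m2 k s None \<noteq> 0" using ls_nz[OF L] .
  then obtain i where i: "icoeff (s$i) (mdeg m1 m2 i - k) \<noteq> 0"
    by (metis sub_vec_simps(2) vec_eq_iff zero_index)
  then have j: "mdeg m1 m2 i - k \<ge> 0" and cf: "coeff (s$i) (nat (mdeg m1 m2 i - k)) \<noteq> 0"
    by (auto simp: icoeff_def split: if_splits)
  then have nz: "s$i \<noteq> 0" by auto
  have "nat (mdeg m1 m2 i - k) \<le> degree (s$i)" using cf le_degree by blast
  then have "mdeg m1 m2 i - k \<le> int (degree (s$i))" using j by linarith
  then show ?thesis using ls_deg_le[OF L nz] nz by (intro exI[of _ i]) auto
qed

lemma par_smult:
  assumes L: "line_subbundle m1 m2 k s" and L': "line_subbundle m1 m2 k' t"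
    and p: "s$1 * t$2 = s$2 * t$1"
  shows "k' = k \<and> (\<exists>c. c \<noteq> 0 \<and> t$1 = smult c (s$1) \<and> t$2 = smult c (s$2))"
proof -
  have cs: "coprime (s$1) (s$2)" by (rule ls_coprime[OF L])
  have ct: "coprime (t$1) (t$2)" by (rule ls_coprime[OF L'])
  have "\<exists>c. c \<noteq> 0 \<and> t$1 = smult c (s$1) \<and> t$2 = smult c (s$2)"
  proof (cases "s$1 = 0")
    case False
    then show ?thesis using par_aux[OF cs ct False p] by blast
  next
    case True
    then have "s$2 \<noteq> 0" using ls_s0[OF L] by (auto simp: vec2_eq)
    moreover have "coprime (s$2) (s$1)" "coprime (t$2) (t$1)" using cs ct by (simp_all add: coprime_commute)
    moreover have "s$2 * t$1 = s$1 * t$2" using p by simp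
    ultimately obtain c where "c \<noteq> 0" "t$2 = smult c (s$2)" "t$1 = smult c (s$1)"
      using par_aux[of "s$2" "s$1" "t$2" "t$1"] by blast
    then show ?thesis by blast
  qed
  then obtain c where c: "c \<noteq> 0" "t$1 = smult c (s$1)" "t$2 = smult c (s$2)" by blast
  have tdeg: "t$i = smult c (s$i)" for i using exhaust_2[of i] c by auto
  have dg: "degree (t$i) = degree (s$i)" for i using tdeg c(1) by simp
  have tz: "t$i \<noteq> 0 \<longleftrightarrow> s$i \<noteq> 0" for i using tdeg c(1) by simp
  obtain i where i: "s$i \<noteq> 0" "int (degree (s$i)) = mdeg m1 m2 i - k" using ls_deg_eq[OF L] by blast
  obtain i' where i': "t$i' \<noteq> 0" "int (degree (t$i')) = mdeg m1 m2 i' - k'" using ls_deg_eq[OF L'] by blast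
  have a: "int (degree (t$i)) \<le> mdeg m1 m2 i - k'" using ls_deg_le[OF L', of i] i(1) tz by blast
  have b: "int (degree (s$i')) \<le> mdeg m1 m2 i' - k" using ls_deg_le[OF L, of i'] i'(1) tz by blast
  have "k' = k" using a b i(2) i'(2) dg[of i] dg[of i'] by linarith
  then show ?thesis using c by blast
qed

lemma icoeff_smult: "icoeff (smult c p) j = c * icoeff p j"
  by (simp add: icoeff_def)

lemma sub_vec_smult:
  assumes "t$1 = smult c (s$1)" "t$2 = smult c (s$2)"
  shows "sub_vec m1 m2 k t x = c *s sub_vec m1 m2 k s x"
proof -
  have "t$i = smult c (s$i)" for i using exhaust_2[of i] assms by auto
  then show ?thesis by (cases x) (simp_all add: vec_eq_iff icoeff_smult)
qed

lemma par_IL: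
  assumes L: "line_subbundle m1 m2 k s" and L': "line_subbundle m1 m2 k' t"
    and p: "s$1 * t$2 = s$2 * t$1"
  shows "k' = k \<and> IL z1 m1 m2 F k' t = IL z1 m1 m2 F k s"
proof -
  obtain c where k: "k' = k" and c: "c \<noteq> 0" "t$1 = smult c (s$1)" "t$2 = smult c (s$2)"
    using par_smult[OF L L' p] by blast
  have "sub_fibre z1 m1 m2 k' t i = sub_fibre z1 m1 m2 k s i" for i
    unfolding sub_fibre_def k sub_vec_smult[OF c(2,3)] using cline_smult c(1) by blast
  then show ?thesis using k by (simp add: IL_def)
qed

lemma mvi: "((A::'a::comm_ring_1^2^2) *v x)$i = A$i$1 * x$1 + A$i$2 * x$2"
  by (simp add: matrix_vector_mult_def sum_2)

lemma kernel_par: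
  fixes A :: "complex poly^2^2"
  assumes A: "A \<noteq> 0" and s: "A *v s = 0" and t: "A *v t = 0"
  shows "s$1 * t$2 = s$2 * t$1"
proof -
  obtain i j where ij: "A$i$j \<noteq> 0" using A by (metis vec_eq_iff zero_index)
  have rs: "A$i$1 * s$1 = - (A$i$2 * s$2)" using s mvi[of A s i] by (simp add: eq_neg_iff_add_eq_0)
  have rt: "A$i$1 * t$1 = - (A$i$2 * t$2)" using t mvi[of A t i] by (simp add: eq_neg_iff_add_eq_0)
  have e1: "A$i$1 * (s$1 * t$2 - s$2 * t$1) = 0"
  proof -
    have "A$i$1 * (s$1 * t$2 - s$2 * t$1) = (A$i$1 * s$1) * t$2 - s$2 * (A$i$1 * t$1)" by (simp add: algebra_simps)
    also have "\<dots> = 0" unfolding rs rt by (simp add: algebra_simps)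
    finally show ?thesis .
  qed
  have rs': "A$i$2 * s$2 = - (A$i$1 * s$1)" using rs by simp
  have rt': "A$i$2 * t$2 = - (A$i$1 * t$1)" using rt by simp
  have e2: "A$i$2 * (s$1 * t$2 - s$2 * t$1) = 0"
  proof -
    have "A$i$2 * (s$1 * t$2 - s$2 * t$1) = s$1 * (A$i$2 * t$2) - (A$i$2 * s$2) * t$1" by (simp add: algebra_simps)
    also have "\<dots> = 0" unfolding rs' rt' by (simp add: algebra_simps)
    finally show ?thesis .
  qed
  have "A$i$1 \<noteq> 0 \<or> A$i$2 \<noteq> 0" using ij exhaust_2[of j] by auto
  then show ?thesis using e1 e2 by auto
qed

lemma IL_sub: "IL z1 m1 m2 F k s \<subseteq> {1..4}"
  by (auto simp: IL_def)

lemma betaI_alt: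
  assumes "I \<subseteq> {1..4}"
  shows "betaI \<beta> I = 2 * (\<Sum>i\<in>I. \<beta> i) - (\<Sum>i\<in>{1..4}. \<beta> i)"
proof -
  have "(\<Sum>i\<in>{1..4} - I. \<beta> i) = (\<Sum>i\<in>{1..4}. \<beta> i) - (\<Sum>i\<in>I. \<beta> i)"
    using assms by (simp add: sum_diff)
  then show ?thesis by (simp add: betaI_def)
qed

lemma betaI_lower:
  assumes b: "beta_ok \<beta>" and I: "I \<subseteq> {1..4}"
  shows "betaI \<beta> I \<ge> - real (card ({1..4} - I))"
proof -
  have "(\<Sum>i\<in>I. \<beta> i) \<ge> 0" using b I by (intro sum_nonneg) (auto simp: beta_ok_def)
  moreover have "(\<Sum>j\<in>{1..4} - I. \<beta> j) \<le> (\<Sum>j\<in>{1..4} - I. 1)"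
    using b by (intro sum_mono) (auto simp: beta_ok_def less_imp_le)
  ultimately show ?thesis by (simp add: betaI_def)
qed

lemma sum_if0:
  assumes "finite S"
  shows "(\<Sum>i\<in>S. if i \<in> I then 0 else (t::real)) = t * real (card (S - I))"
proof -
  have "(\<Sum>i\<in>S. if i \<in> I then 0 else t) = (\<Sum>i\<in>S - I. t)"
    using assms by (simp add: sum.If_cases Diff_eq)
  then show ?thesis by simp
qed

lemma beta_witness1:
  assumes I: "I \<subseteq> {1..4}"
  defines "\<beta> \<equiv> \<lambda>i. if i \<in> I then 0 else (7/8::real)"
  shows "beta_ok \<beta>" "betaI \<beta> I = - (7/8) * real (card ({1..4} - I))"
proof -
  show "beta_ok \<beta>" by (simp add: beta_ok_def \<beta>_def)
  have "(\<Sum>i\<in>I. \<beta> i) = 0" by (simp add: \<beta>_def)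
  moreover have "(\<Sum>j\<in>{1..4} - I. \<beta> j) = 7/8 * real (card ({1..4} - I))"
    by (simp add: \<beta>_def)
  ultimately show "betaI \<beta> I = - (7/8) * real (card ({1..4} - I))" by (simp add: betaI_def)
qed

lemma card_U4: "card ({1..4::nat} - I) \<le> 4"
  by (metis card_atLeastAtMost diff_Suc_1 finite_atLeastAtMost card_mono Diff_subset)

lemma part1:
  assumes z: "z1 \<noteq> 0" "z1 \<noteq> 1" and Q: "QPH z1 m1 m2 F A" and A0: "A \<noteq> 0" and dt: "det A = 0"
    and L: "line_subbundle m1 m2 k s" and As: "A *v s = 0"
  shows "(\<forall>\<beta>. beta_ok \<beta> \<longrightarrow> \<not> stable z1 m1 m2 \<beta> F A) \<longleftrightarrow>
           - real (card ({1..4} - IL z1 m1 m2 F k s)) \<ge> real_of_int (m1 + m2 - 2 * k)"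
proof -
  let ?I = "IL z1 m1 m2 F k s"
  have tr: "A$1$1 + A$2$2 = 0" using trace_zero[OF z Q] .
  have stab: "stable z1 m1 m2 \<beta> F A \<longleftrightarrow> betaI \<beta> ?I < real_of_int (m1 + m2 - 2 * k)" for \<beta>
  proof
    assume "stable z1 m1 m2 \<beta> F A"
    moreover have "invariant A s" using As by (simp add: invariant_def)
    ultimately show "betaI \<beta> ?I < real_of_int (m1 + m2 - 2 * k)" using L by (simp add: stable_def)
  next
    assume h: "betaI \<beta> ?I < real_of_int (m1 + m2 - 2 * k)"
    show "stable z1 m1 m2 \<beta> F A" unfolding stable_def
    proof (intro allI impI)
      fix k' t assume a: "line_subbundle m1 m2 k' t \<and> invariant A t"
      then have At: "A *v t = 0" using inv_kernel[OF tr dt] ls_s0 by blast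
      have "s$1 * t$2 = s$2 * t$1" using kernel_par[OF A0 As At] .
      then have kk: "k' = k" and "IL z1 m1 m2 F k' t = ?I" using par_IL L a by blast+
      then show "betaI \<beta> (IL z1 m1 m2 F k' t) < real_of_int (m1 + m2 - 2 * k')" using h kk by simp
    qed
  qed
  have Isub: "?I \<subseteq> {1..4}" by (rule IL_sub)
  show ?thesis
  proof
    assume h: "\<forall>\<beta>. beta_ok \<beta> \<longrightarrow> \<not> stable z1 m1 m2 \<beta> F A"
    show "- real (card ({1..4} - ?I)) \<ge> real_of_int (m1 + m2 - 2 * k)"
    proof (rule ccontr)
      assume "\<not> ?thesis"
      then have "real_of_int (- int (card ({1..4} - ?I))) < real_of_int (m1 + m2 - 2 * k)" by simp
      then have "- int (card ({1..4} - ?I)) < m1 + m2 - 2 * k" by (simp only: of_int_less_iff)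
      then have "1 - int (card ({1..4} - ?I)) \<le> m1 + m2 - 2 * k" by linarith
      then have "real_of_int (1 - int (card ({1..4} - ?I))) \<le> real_of_int (m1 + m2 - 2 * k)" by (simp only: of_int_le_iff)
      then have c: "real_of_int (m1 + m2 - 2 * k) \<ge> 1 - real (card ({1..4} - ?I))" by simp
      define \<beta> where "\<beta> = (\<lambda>i. if i \<in> ?I then 0 else (7/8::real))"
      have ok: "beta_ok \<beta>" and bv: "betaI \<beta> ?I = - (7/8) * real (card ({1..4} - ?I))"
        using beta_witness1[OF Isub] unfolding \<beta>_def by blast+
      have "real (card ({1..4} - ?I)) \<le> 4" using card_U4 by simp
      then have "betaI \<beta> ?I < real_of_int (m1 + m2 - 2 * k)" using c bv by linarith
      then show False using h ok stab by blast
    qed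
  next
    assume h: "- real (card ({1..4} - ?I)) \<ge> real_of_int (m1 + m2 - 2 * k)"
    show "\<forall>\<beta>. beta_ok \<beta> \<longrightarrow> \<not> stable z1 m1 m2 \<beta> F A"
      using betaI_lower[OF _ Isub] h stab by (meson not_less order_trans)
  qed
qed

definition zz :: "complex \<Rightarrow> nat \<Rightarrow> complex" where
  "zz z1 i = (if i = 1 then z1 else if i = 2 then 0 else 1)"

definition lagr :: "complex \<Rightarrow> (nat \<Rightarrow> complex) \<Rightarrow> complex poly" where
  "lagr z1 b = smult (b 2 / z1) ([:-1,1:] * [:-z1,1:]) + smult (b 3 / (1 - z1)) ([:0,1:] * [:-z1,1:])
     + smult (b 1 / (z1 * (z1 - 1))) ([:0,1:] * [:-1,1:])"

lemma deg_prod2: fixes a b c :: complex shows "degree (smult c ([:a,1:] * [:b,1:])) \<le> 2"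
proof -
  have "degree ([:a,1:] * [:b,1::complex:]) \<le> degree [:a,1::complex:] + degree [:b,1::complex:]" by (rule degree_mult_le)
  then have "degree ([:a,1:] * [:b,1::complex:]) \<le> 2" by simp
  then show ?thesis using degree_smult_le order_trans by blast
qed

lemma lagr_deg: "degree (lagr z1 b) \<le> 2"
  unfolding lagr_def
  by (intro degree_add_le deg_prod2)

lemma poly_lin: "poly [:a,1:] x = a + (x::complex)" by simp

lemma lagr_val:
  assumes "z1 \<noteq> 0" "z1 \<noteq> 1" "i \<in> {1,2,3}"
  shows "poly (lagr z1 b) (zz z1 i) = b i"
proof -
  have a: "z1 - 1 \<noteq> 0" "1 - z1 \<noteq> 0" using assms by auto
  have ev: "poly (lagr z1 b) x = b 2 / z1 * ((-1 + x) * (-z1 + x)) + b 3 / (1 - z1) * ((0 + x) * (-z1 + x))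
     + b 1 / (z1 * (z1 - 1)) * ((0 + x) * (-1 + x))" for x
    unfolding lagr_def poly_add poly_smult poly_mult poly_lin by simp
  have "i = 1 \<or> i = 2 \<or> i = 3" using assms(3) by auto
  then show ?thesis
  proof (elim disjE)
    assume "i = 1" then show ?thesis using assms a by (simp add: ev zz_def)
  next
    assume "i = 2" then show ?thesis using assms a by (simp add: ev zz_def)
  next
    assume "i = 3" then show ?thesis using assms a by (simp add: ev zz_def)
  qed
qed

lemma card_le1_sub:
  assumes "finite X" "card X \<le> 1"
  shows "\<exists>j. X \<subseteq> {j}"
proof (cases "X = {}")
  case True then show ?thesis by auto
next
  case False
  then obtain x where x: "x \<in> X" by auto
  have "\<forall>a\<in>X. \<forall>b\<in>X. a = b" using assms card_le_Suc0_iff_eq[of X] by simp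
  then show ?thesis using x by blast
qed

lemma interp:
  assumes z: "z1 \<noteq> 0" "z1 \<noteq> 1" and e: "e \<ge> 1" and J: "J \<subseteq> {1..4}" and cJ: "int (card J) \<le> e"
  shows "\<exists>p. deg_le p e \<and> (\<forall>i\<in>J. i \<noteq> 4 \<longrightarrow> poly p (zz z1 i) = a i) \<and> (4 \<in> J \<longrightarrow> icoeff p e = a 4)"
proof -
  have fJ: "finite J" using J finite_subset by blast
  have ic: "icoeff p e = coeff p (nat e)" for p using e by (simp add: icoeff_def)
  have dl: "deg_le p e" if "degree p \<le> nat e" for p using that e unfolding deg_le_def by linarith
  have i123: "i \<in> J \<Longrightarrow> i \<noteq> 4 \<Longrightarrow> i \<in> {1,2,3}" for i using J by auto
  show ?thesis
  proof (cases "4 \<in> J")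
    case True
    show ?thesis
    proof (cases "e \<ge> 3")
      case True
      define b where "b i = a i - a 4 * zz z1 i ^ nat e" for i
      define p where "p = monom (a 4) (nat e) + lagr z1 b"
      have "degree p \<le> nat e" unfolding p_def
        using lagr_deg[of z1 b] True by (intro degree_add_le) (auto simp: degree_monom_le)
      moreover have "coeff (lagr z1 b) (nat e) = 0" using lagr_deg[of z1 b] True by (intro coeff_eq_0) linarith
      moreover have "poly p (zz z1 i) = a i" if "i \<in> J" "i \<noteq> 4" for i
        using lagr_val[OF z i123[OF that]] by (simp add: p_def b_def poly_monom)
      ultimately show ?thesis using \<open>4 \<in> J\<close> by (intro exI[of _ p]) (auto simp: dl ic p_def)
    next
      case False
      have "card (J - {4}) \<le> 1" using cJ False \<open>4 \<in> J\<close> fJ by (simp add: card_Diff_singleton)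
      then obtain j where jj: "J - {4} \<subseteq> {j}" using card_le1_sub fJ by blast
      define p where "p = monom (a 4) (nat e) + [:a j - a 4 * zz z1 j ^ nat e:]"
      have "degree p \<le> nat e" unfolding p_def
        by (intro degree_add_le) (auto simp: degree_monom_le)
      moreover have "poly p (zz z1 i) = a i" if "i \<in> J" "i \<noteq> 4" for i
        using jj that by (auto simp: p_def poly_monom)
      moreover have "coeff p (nat e) = a 4"
      proof -
        have "nat e = Suc (nat e - 1)" using e by linarith
        then show ?thesis by (metis p_def coeff_add coeff_monom coeff_pCons_Suc coeff_pCons_0 add.right_neutral pCons_0_0 coeff_0)
      qed
      ultimately show ?thesis by (intro exI[of _ p]) (auto simp: dl ic)
    qed
  next
    case False
    show ?thesis
    proof (cases "e \<ge> 2")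
      case True
      define p where "p = lagr z1 a"
      have "degree p \<le> nat e" unfolding p_def using lagr_deg[of z1 a] True by linarith
      moreover have "poly p (zz z1 i) = a i" if "i \<in> J" "i \<noteq> 4" for i
        using lagr_val[OF z i123[OF that]] by (simp add: p_def)
      ultimately show ?thesis using False by (intro exI[of _ p]) (auto simp: dl)
    next
      case False
      then have "card J \<le> 1" using cJ by linarith
      then obtain j where jj: "J \<subseteq> {j}" using card_le1_sub fJ by blast
      define p where "p = [:a j:]"
      have "degree p \<le> nat e" by (simp add: p_def)
      moreover have "poly p (zz z1 i) = a i" if "i \<in> J" for i using jj that by (auto simp: p_def)
      ultimately show ?thesis using \<open>4 \<notin> J\<close> by (intro exI[of _ p]) (auto simp: dl)
    qed
  qed
qed

lemma comb0:
  fixes f :: "nat \<Rightarrow> 'a"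
  assumes nc: "\<forall>a\<in>{1..4::nat}. \<forall>b\<in>{1..4}. \<exists>j\<in>{1..4}. f j \<noteq> f a \<and> f j \<noteq> f b"
  shows "betaI (\<lambda>i. 1 / (4 * real (card {j\<in>{1..4::nat}. f j = f i}))) {i\<in>{1..4}. l = f i} < 0"
proof -
  define U where "U = {1..4::nat}"
  define cls where "cls i = {j\<in>U. f j = f i}" for i
  define \<beta> where "\<beta> i = 1 / (4 * real (card (cls i)))" for i
  have fU: "finite U" by (simp add: U_def)
  have fin: "finite (cls i)" for i unfolding cls_def using fU by simp
  have cpos: "card (cls i) \<ge> 1" if "i \<in> U" for i
  proof -
    have "i \<in> cls i" using that by (simp add: cls_def)
    then have "cls i \<noteq> {}" by blast
    then have "card (cls i) > 0" using fin[of i] by (simp add: card_gt_0_iff)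
    then show ?thesis by linarith
  qed
  have bpos: "\<beta> i > 0" if "i \<in> U" for i
  proof -
    have "real (card (cls i)) > 0" using cpos[OF that] by linarith
    then show ?thesis unfolding \<beta>_def by simp
  qed
  have sc: "sum \<beta> (cls a) = 1/4" if "a \<in> U" for a
  proof -
    have "sum \<beta> (cls a) = sum (\<lambda>_. 1 / (4 * real (card (cls a)))) (cls a)"
    proof (rule sum.cong)
      fix i assume "i \<in> cls a"
      then have "cls i = cls a" unfolding cls_def by auto
      then show "\<beta> i = 1 / (4 * real (card (cls a)))" by (simp add: \<beta>_def)
    qed (rule refl)
    also have "\<dots> = real (card (cls a)) * (1 / (4 * real (card (cls a))))" by (rule sum_constant)
    also have "\<dots> = 1/4"
    proof -
      have "real (card (cls a)) \<noteq> 0" using cpos[OF that] by linarith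
      then show ?thesis by simp
    qed
    finally show ?thesis .
  qed
  let ?I = "{i\<in>U. l = f i}"
  have main: "betaI \<beta> ?I < 0"
  proof (cases "?I = {}")
    case True
    have "U \<noteq> {}" by (simp add: U_def)
    then have "sum \<beta> U > 0" using fU bpos by (intro sum_pos) auto
    moreover have "betaI \<beta> {} = - sum \<beta> U" by (simp add: betaI_def U_def)
    ultimately show ?thesis unfolding True by simp
  next
    case False
    then obtain a where a: "a \<in> U" "l = f a" by auto
    have Ia: "?I = cls a" using a by (auto simp: cls_def)
    obtain j where j: "j \<in> U" "f j \<noteq> f a" using nc a(1) unfolding U_def by blast
    obtain j' where j': "j' \<in> U" "f j' \<noteq> f a" "f j' \<noteq> f j" using nc a(1) j(1) unfolding U_def by blast
    have disj: "cls j \<inter> cls j' = {}" using j' by (auto simp: cls_def)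
    have sub: "cls j \<union> cls j' \<subseteq> U - ?I" using j j' a by (auto simp: cls_def)
    have "sum \<beta> (cls j \<union> cls j') = sum \<beta> (cls j) + sum \<beta> (cls j')" by (rule sum.union_disjoint[OF fin fin disj])
    then have "sum \<beta> (cls j \<union> cls j') = 1/2" using sc[OF j(1)] sc[OF j'(1)] by simp
    moreover have "sum \<beta> (cls j \<union> cls j') \<le> sum \<beta> (U - ?I)"
      using sub fU bpos by (intro sum_mono2) (auto intro: less_imp_le)
    ultimately have "sum \<beta> (U - ?I) \<ge> 1/2" by simp
    moreover have "sum \<beta> ?I = 1/4" using Ia sc a(1) by simp
    ultimately show ?thesis by (simp add: betaI_def U_def)
  qed
  have beq: "\<beta> = (\<lambda>i. 1 / (4 * real (card {j\<in>{1..4::nat}. f j = f i})))"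
    unfolding \<beta>_def[abs_def] cls_def U_def by (rule refl)
  have Ieq: "?I = {i\<in>{1..4}. l = f i}" by (simp add: U_def)
  show ?thesis using main unfolding beq Ieq .
qed

lemma comb0_bounds:
  fixes f :: "nat \<Rightarrow> 'a"
  defines "\<beta> \<equiv> \<lambda>i. 1 / (4 * real (card {j\<in>{1..4::nat}. f j = f i}))"
  shows "beta_ok \<beta>" "sum \<beta> {1..4} \<le> 1"
proof -
  have b: "0 \<le> \<beta> i \<and> \<beta> i \<le> 1/4" if "i \<in> {1..4}" for i
  proof -
    have "i \<in> {j\<in>{1..4::nat}. f j = f i}" using that by simp
    then have "{j\<in>{1..4::nat}. f j = f i} \<noteq> {}" by blast
    then have "card {j\<in>{1..4::nat}. f j = f i} > 0" by (simp add: card_gt_0_iff)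
    then have "real (card {j\<in>{1..4::nat}. f j = f i}) \<ge> 1" by linarith
    then show ?thesis unfolding \<beta>_def by (simp add: divide_simps)
  qed
  then show "beta_ok \<beta>" by (force simp: beta_ok_def)
  have "sum \<beta> {1..4} \<le> sum (\<lambda>_. 1/4) {1..4::nat}" using b by (intro sum_mono) auto
  then show "sum \<beta> {1..4} \<le> 1" by simp
qed

lemma betaI_le_sum:
  assumes "I \<subseteq> {1..4}" "beta_ok \<beta>"
  shows "betaI \<beta> I \<le> sum \<beta> {1..4}"
proof -
  have "sum \<beta> I \<le> sum \<beta> {1..4}" using assms by (intro sum_mono2) (auto simp: beta_ok_def)
  then show ?thesis using betaI_alt[OF assms(1)] by simp
qed

lemma stable0: "stable z1 m1 m2 \<beta> F 0 \<longleftrightarrow>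
   (\<forall>k s. line_subbundle m1 m2 k s \<longrightarrow> betaI \<beta> (IL z1 m1 m2 F k s) < real_of_int (m1 + m2 - 2 * k))"
  by (simp add: stable_def invariant_def)

lemma ls_k_le: "line_subbundle m1 m2 k s \<Longrightarrow> s$i \<noteq> 0 \<Longrightarrow> k \<le> mdeg m1 m2 i"
  using ls_deg_le[of m1 m2 k s i] by linarith

lemma part2_if:
  assumes L: "line_subbundle m1 m2 m1 s" and L': "line_subbundle m1 m2 m2 s'"
    and U: "IL z1 m1 m2 F m1 s \<union> IL z1 m1 m2 F m2 s' = {1..4}" and b: "beta_ok \<beta>"
  shows "\<not> stable z1 m1 m2 \<beta> F 0"
proof
  assume "stable z1 m1 m2 \<beta> F 0"
  then have st: "\<forall>k s. line_subbundle m1 m2 k s \<longrightarrow> betaI \<beta> (IL z1 m1 m2 F k s) < real_of_int (m1 + m2 - 2 * k)"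
    by (simp only: stable0)
  have h1: "betaI \<beta> (IL z1 m1 m2 F m1 s) < real_of_int (m1 + m2 - 2 * m1)" using st L by blast
  have h2: "betaI \<beta> (IL z1 m1 m2 F m2 s') < real_of_int (m1 + m2 - 2 * m2)" using st L' by blast
  let ?A = "IL z1 m1 m2 F m1 s" and ?B = "IL z1 m1 m2 F m2 s'"
  have nn: "sum \<beta> (?A \<inter> ?B) \<ge> 0" using b IL_sub by (intro sum_nonneg) (force simp: beta_ok_def)
  have "sum \<beta> {1..4} = sum \<beta> ?A + sum \<beta> ?B - sum \<beta> (?A \<inter> ?B)"
    using U sum_Un[of ?A ?B \<beta>] IL_sub by (metis finite_atLeastAtMost finite_subset)
  then have "betaI \<beta> ?A + betaI \<beta> ?B \<ge> 0"
    using betaI_alt[OF IL_sub, of \<beta>] betaI_alt[OF IL_sub, of \<beta>] nn by simp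
  then show False using h1 h2 by simp
qed

definition cs :: "complex^2 \<Rightarrow> complex poly^2" where "cs w = (\<chi> i. [:w$i:])"

lemma cs_nth[simp]: "cs w $ i = [:w$i:]" by (simp add: cs_def)

lemma cs_sub_vec: assumes "m1 = k" "m2 = k" shows "sub_vec m1 m2 k (cs w) x = w"
proof -
  have "mdeg m1 m2 i - k = 0" for i using assms by (simp add: mdeg_def)
  then show ?thesis by (cases x) (simp_all add: vec_eq_iff icoeff_def)
qed

lemma deg_le_const: "deg_le [:c:] 0" by (simp add: deg_le_def)

lemma cs_ls: assumes "w \<noteq> 0" "m1 = k" "m2 = k" shows "line_subbundle m1 m2 k (cs w)"
proof -
  have "mdeg m1 m2 i - k = 0" for i using assms by (simp add: mdeg_def)
  then show ?thesis using assms cs_sub_vec[OF assms(2,3)] by (simp add: line_subbundle_def deg_le_const)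
qed

lemma const_of_deg0: "deg_le p 0 \<Longrightarrow> p = [:coeff p 0:]"
proof -
  assume "deg_le p 0"
  then have "p = 0 \<or> degree p = 0" unfolding deg_le_def by linarith
  then show ?thesis using degree_0_id[of p] by auto
qed

lemma IL_cs: "m1 = k \<Longrightarrow> m2 = k \<Longrightarrow> IL z1 m1 m2 F k (cs w) = {i\<in>{1..4}. cline w = F i}"
  by (simp add: IL_def sub_fibre_def cs_sub_vec)

lemma QPH_lines: "QPH z1 m1 m2 F A \<Longrightarrow> i \<in> {1..4} \<Longrightarrow> \<exists>v. v \<noteq> 0 \<and> F i = cline v"
  by (auto simp: QPH_def is_line_def)

lemma part2_e0:
  assumes meq: "m1 = m2" and Q: "QPH z1 m1 m2 F 0"
    and nR: "\<not> (\<exists>s s'. line_subbundle m1 m2 m1 s \<and> line_subbundle m1 m2 m2 s' \<and>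
           IL z1 m1 m2 F m1 s \<union> IL z1 m1 m2 F m2 s' = {1..4})"
  shows "\<exists>\<beta>. beta_ok \<beta> \<and> stable z1 m1 m2 \<beta> F 0"
proof -
  have nc: "\<forall>a\<in>{1..4::nat}. \<forall>b\<in>{1..4}. \<exists>j\<in>{1..4}. F j \<noteq> F a \<and> F j \<noteq> F b"
  proof (intro ballI)
    fix a b :: nat assume a: "a \<in> {1..4}" and b: "b \<in> {1..4}"
    obtain va where va: "va \<noteq> 0" "F a = cline va" using QPH_lines[OF Q a] by blast
    obtain vb where vb: "vb \<noteq> 0" "F b = cline vb" using QPH_lines[OF Q b] by blast
    have La: "line_subbundle m1 m2 m1 (cs va)" using cs_ls[OF va(1)] meq by simp
    have Lb: "line_subbundle m1 m2 m2 (cs vb)" using cs_ls[OF vb(1)] meq by simp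
    have ne: "IL z1 m1 m2 F m1 (cs va) \<union> IL z1 m1 m2 F m2 (cs vb) \<noteq> {1..4}" using nR La Lb by blast
    have "IL z1 m1 m2 F m1 (cs va) \<union> IL z1 m1 m2 F m2 (cs vb) \<subseteq> {1..4}" using IL_sub by blast
    then obtain j where j: "j \<in> {1..4}" "j \<notin> IL z1 m1 m2 F m1 (cs va)" "j \<notin> IL z1 m1 m2 F m2 (cs vb)"
      using ne by blast
    have ia: "IL z1 m1 m2 F m1 (cs va) = {i\<in>{1..4}. cline va = F i}" by (rule IL_cs) (use meq in auto)
    have ib: "IL z1 m1 m2 F m2 (cs vb) = {i\<in>{1..4}. cline vb = F i}" by (rule IL_cs) (use meq in auto)
    have "F j \<noteq> F a" using j(1,2) va(2) unfolding ia by blast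
    moreover have "F j \<noteq> F b" using j(1,3) vb(2) unfolding ib by blast
    ultimately show "\<exists>j\<in>{1..4}. F j \<noteq> F a \<and> F j \<noteq> F b" using j(1) by blast
  qed
  define \<beta> where "\<beta> = (\<lambda>i. 1 / (4 * real (card {j\<in>{1..4::nat}. F j = F i})))"
  have ok: "beta_ok \<beta>" and s1: "sum \<beta> {1..4} \<le> 1" unfolding \<beta>_def by (rule comb0_bounds)+
  have "stable z1 m1 m2 \<beta> F 0" unfolding stable0
  proof (intro allI impI)
    fix k s assume L: "line_subbundle m1 m2 k s"
    show "betaI \<beta> (IL z1 m1 m2 F k s) < real_of_int (m1 + m2 - 2 * k)"
    proof (cases "k < m1")
      case True
      have "betaI \<beta> (IL z1 m1 m2 F k s) \<le> 1" using betaI_le_sum[OF IL_sub[of z1 m1 m2 F k s] ok] s1 by linarith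
      then show ?thesis using True meq by simp
    next
      case False
      obtain i where "s$i \<noteq> 0" using ls_s0[OF L] by (metis vec_eq_iff zero_index)
      then have "k \<le> mdeg m1 m2 i" using ls_k_le[OF L] by blast
      moreover have "mdeg m1 m2 i = m1" using meq by (simp add: mdeg_def)
      ultimately have k: "k = m1" using False by linarith
      have md: "mdeg m1 m2 i - k = 0" for i using k meq by (simp add: mdeg_def)
      define w where "w = (\<chi> i. coeff (s$i) 0)"
      have si: "s$i = [:w$i:]" for i
      proof -
        have "deg_le (s$i) (mdeg m1 m2 i - k)" using L by (simp add: line_subbundle_def)
        then have "deg_le (s$i) 0" using md[of i] by simp
        then have e: "s$i = [:coeff (s$i) 0:]" by (rule const_of_deg0)
        have wi: "w$i = coeff (s$i) 0" by (simp add: w_def)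
        show ?thesis by (subst wi) (rule e)
      qed
      have sw: "s = cs w" unfolding vec_eq_iff cs_nth using si by blast
      have IL: "IL z1 m1 m2 F k s = {i\<in>{1..4}. cline w = F i}" unfolding sw by (rule IL_cs) (use k meq in auto)
      have "betaI \<beta> {i\<in>{1..4}. cline w = F i} < 0" unfolding \<beta>_def by (rule comb0[OF nc])
      moreover have "real_of_int (m1 + m2 - 2 * k) = 0" using k meq by simp
      ultimately show ?thesis unfolding IL by simp
    qed
  qed
  then show ?thesis using ok by blast
qed

definition e1v :: "complex^2" where "e1v = (\<chi> i. if i = 1 then 1 else 0)"
definition sL1 :: "complex poly^2" where "sL1 = (\<chi> i. if i = 1 then [:1:] else 0)"

lemma e1v_simps[simp]: "e1v$1 = 1" "e1v$2 = 0" by (simp_all add: e1v_def)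
lemma e1v_nz: "e1v \<noteq> 0" by (simp add: vec_eq_iff) (metis e1v_simps(1) one_neq_zero)

lemma cline_e1v: "w \<noteq> 0 \<Longrightarrow> cline w = cline e1v \<longleftrightarrow> w$2 = 0"
  using cline_eq_iff[of w e1v] e1v_nz by simp

lemma sL1_sub_vec: "sub_vec m1 m2 m1 sL1 x = e1v"
proof -
  have "sub_vec m1 m2 m1 sL1 x $ i = e1v $ i" for i
    using exhaust_2[of i] by (cases x) (auto simp: sL1_def e1v_def icoeff_def)
  then show ?thesis by (simp add: vec_eq_iff)
qed

lemma sL1_ls: "m2 \<le> m1 \<Longrightarrow> line_subbundle m1 m2 m1 sL1"
proof -
  assume m: "m2 \<le> m1"
  have "deg_le (sL1 $ i) (mdeg m1 m2 i - m1)" for i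
    using exhaust_2[of i] by (auto simp: sL1_def deg_le_def)
  then show ?thesis using sL1_sub_vec e1v_nz by (simp add: line_subbundle_def)
qed

lemma IL_sL1: "IL z1 m1 m2 F m1 sL1 = {i\<in>{1..4}. cline e1v = F i}"
  by (simp add: IL_def sub_fibre_def sL1_sub_vec)

lemma pt_zz: "i \<in> {1..4} \<Longrightarrow> i \<noteq> 4 \<Longrightarrow> pt z1 i = Some (zz z1 i)"
  by (auto simp: pt_def zz_def)

lemma pt_4: "pt z1 4 = None" by (simp add: pt_def)

lemma sum_if0': "finite S \<Longrightarrow> sum (\<lambda>i. if i \<in> I then 0 else (t::real)) S = t * real (card (S - I))"
  by (rule sum_if0)

lemma part2_e1:
  assumes z: "z1 \<noteq> 0" "z1 \<noteq> 1" and lt: "m2 < m1" and Q: "QPH z1 m1 m2 F 0"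
    and nR: "\<not> (\<exists>s s'. line_subbundle m1 m2 m1 s \<and> line_subbundle m1 m2 m2 s' \<and>
           IL z1 m1 m2 F m1 s \<union> IL z1 m1 m2 F m2 s' = {1..4})"
  shows "\<exists>\<beta>. beta_ok \<beta> \<and> stable z1 m1 m2 \<beta> F 0"
proof -
  define U where "U = {1..4::nat}"
  define e where "e = m1 - m2"
  have e1: "e \<ge> 1" using lt by (simp add: e_def)
  define I1 where "I1 = {i\<in>{1..4::nat}. cline e1v = F i}"
  define J1 where "J1 = U - I1"
  have I1U: "I1 \<subseteq> U" by (auto simp: I1_def U_def)
  have fU: "finite U" by (simp add: U_def)
  have fJ1: "finite J1" using fU by (simp add: J1_def)
  have LL1: "line_subbundle m1 m2 m1 sL1" using sL1_ls lt by simp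
  have IL1: "IL z1 m1 m2 F m1 sL1 = I1" by (simp add: IL_sL1 I1_def)
  have nR': "I1 \<union> IL z1 m1 m2 F m2 s' \<noteq> U" if "line_subbundle m1 m2 m2 s'" for s'
    using nR LL1 that IL1 unfolding U_def by blast
  define vv where "vv i = (SOME v. v \<noteq> 0 \<and> F i = cline v)" for i
  have vv: "vv i \<noteq> 0 \<and> F i = cline (vv i)" if "i \<in> U" for i
  proof -
    have "\<exists>v. v \<noteq> 0 \<and> F i = cline v" using QPH_lines[OF Q] that by (simp add: U_def)
    then show ?thesis unfolding vv_def by (rule someI_ex)
  qed
  have vv2: "vv i $ 2 \<noteq> 0" if "i \<in> J1" for i
  proof
    assume h: "vv i $ 2 = 0"
    have iU: "i \<in> U" using that by (simp add: J1_def)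
    then have "cline (vv i) = cline e1v" using cline_e1v vv h by blast
    then have "i \<in> I1" using vv[OF iU] iU by (simp add: I1_def U_def)
    then show False using that by (simp add: J1_def)
  qed
  define a where "a i = vv i $ 1 / vv i $ 2" for i
  have n_ge: "int (card J1) \<ge> e + 1"
  proof (rule ccontr)
    assume "\<not> ?thesis"
    then have cJ: "int (card J1) \<le> e" by linarith
    have J1U: "J1 \<subseteq> {1..4}" by (auto simp: J1_def U_def)
    obtain p where p: "deg_le p e" "\<forall>i\<in>J1. i \<noteq> 4 \<longrightarrow> poly p (zz z1 i) = a i" "4 \<in> J1 \<longrightarrow> icoeff p e = a 4"
      using interp[OF z e1 J1U cJ] by blast
    define s' :: "complex poly^2" where "s' = (\<chi> i. if i = 1 then p else [:1:])"
    have s'1: "s'$1 = p" and s'2: "s'$2 = [:1:]" by (simp_all add: s'_def)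
    have sv2: "sub_vec m1 m2 m2 s' x $ 2 = 1" for x by (cases x) (simp_all add: s'2 icoeff_def)
    have Ls': "line_subbundle m1 m2 m2 s'"
    proof -
      have "deg_le (s'$i) (mdeg m1 m2 i - m2)" for i
        using exhaust_2[of i] p(1) by (auto simp: s'1 s'2 e_def deg_le_def)
      moreover have "sub_vec m1 m2 m2 s' x \<noteq> 0" for x
      proof
        assume "sub_vec m1 m2 m2 s' x = 0"
        then have "sub_vec m1 m2 m2 s' x $ 2 = 0" by simp
        then show False using sv2[of x] by simp
      qed
      ultimately show ?thesis by (simp add: line_subbundle_def)
    qed
    have "J1 \<subseteq> IL z1 m1 m2 F m2 s'"
    proof
      fix i assume iJ: "i \<in> J1"
      have iU: "i \<in> U" using iJ by (simp add: J1_def)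
      define w where "w = sub_vec m1 m2 m2 s' (pt z1 i)"
      have w2: "w$2 = 1" by (simp add: w_def sv2)
      have w1: "w$1 = a i"
      proof (cases "i = 4")
        case True
        then show ?thesis using p(3) iJ by (simp add: w_def pt_4 s'1 e_def)
      next
        case False
        then show ?thesis using p(2) iJ iU pt_zz[of i z1] by (simp add: w_def s'1 U_def)
      qed
      have wnz: "w \<noteq> 0"
      proof
        assume "w = 0" then have "w$2 = 0" by simp
        then show False using w2 by simp
      qed
      have "cline w = cline (vv i)"
        using cline_eq_iff[OF wnz conjunct1[OF vv[OF iU]]] w1 w2 vv2[OF iJ] by (simp add: a_def)
      then have "sub_fibre z1 m1 m2 m2 s' i = F i" using vv[OF iU] by (simp add: sub_fibre_def w_def)
      then show "i \<in> IL z1 m1 m2 F m2 s'" using iU by (simp add: IL_def U_def)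
    qed
    moreover have "IL z1 m1 m2 F m2 s' \<subseteq> U" using IL_sub by (simp add: U_def)
    ultimately have "I1 \<union> IL z1 m1 m2 F m2 s' = U" using I1U by (auto simp: J1_def)
    then show False using nR'[OF Ls'] by blast
  qed
  define n where "n = card J1"
  have nU: "n \<le> 4" unfolding n_def J1_def U_def using card_U4 by simp
  have npos: "real n \<ge> real_of_int e + 1" using n_ge by (simp add: n_def)
  define t where "t = (real_of_int e + 1/2) / real n"
  have npos': "real n > 0" using npos e1 by linarith
  have tn: "t * real n = real_of_int e + 1/2" using npos' by (simp add: t_def)
  have t1: "t < 1"
  proof -
    have "t * real n < 1 * real n" using tn npos by simp
    then show ?thesis using npos' by simp
  qed
  have t4: "t > 1/4"
  proof -
    have "real n < 4 * real_of_int e + 2" using nU e1 by linarith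
    then have "(1/4) * real n < t * real n" using tn by simp
    then show ?thesis using npos' by (simp add: mult_less_cancel_right)
  qed
  define \<beta> where "\<beta> i = (if i \<in> I1 then 0 else t)" for i
  have sb: "sum \<beta> S = t * real (card (S - I1))" if "finite S" for S
    unfolding \<beta>_def by (rule sum_if0[OF that])
  have ok: "beta_ok \<beta>" using t1 t4 by (simp add: beta_ok_def \<beta>_def)
  have sU: "sum \<beta> {1..4} = real_of_int e + 1/2"
    using sb[of U] fU tn by (simp add: U_def J1_def n_def)
  have "stable z1 m1 m2 \<beta> F 0" unfolding stable0
  proof (intro allI impI)
    fix k s assume L: "line_subbundle m1 m2 k s"
    show "betaI \<beta> (IL z1 m1 m2 F k s) < real_of_int (m1 + m2 - 2 * k)"
    proof (cases "s$2 = 0")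
      case True
      then have "s$1 \<noteq> 0" using ls_s0[OF L] by (auto simp: vec2_eq)
      then have km: "k \<le> m1" using ls_k_le[OF L] by fastforce
      have "sub_fibre z1 m1 m2 k s i = cline e1v" for i
      proof -
        have "sub_vec m1 m2 k s (pt z1 i) $ 2 = 0" using True by (cases "pt z1 i") (simp_all add: icoeff_def)
        then show ?thesis unfolding sub_fibre_def using cline_e1v ls_nz[OF L] by blast
      qed
      then have IL: "IL z1 m1 m2 F k s = I1" by (auto simp: IL_def I1_def)
      have "sum \<beta> I1 = 0" using sb[of I1] I1U fU finite_subset by auto
      then have "betaI \<beta> I1 = - (real_of_int e + 1/2)" using betaI_alt[of I1 \<beta>] I1U sU by (simp add: U_def)
      moreover have "real_of_int (m1 + m2 - 2 * k) \<ge> - real_of_int e" using km by (simp add: e_def)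
      ultimately show ?thesis using IL by simp
    next
      case False
      have kle: "k \<le> m2" using ls_k_le[OF L False] by simp
      show ?thesis
      proof (cases "k < m2")
        case True
        have "betaI \<beta> (IL z1 m1 m2 F k s) \<le> real_of_int e + 1/2"
          using betaI_le_sum[OF IL_sub[of z1 m1 m2 F k s] ok] sU by simp
        moreover have "real_of_int (m1 + m2 - 2 * k) \<ge> real_of_int e + 2" using True by (simp add: e_def)
        ultimately show ?thesis by linarith
      next
        case False
        then have k: "k = m2" using kle by simp
        let ?I = "IL z1 m1 m2 F k s"
        have "deg_le (s$2) (mdeg m1 m2 2 - k)" using L by (simp only: line_subbundle_def)
        then have "deg_le (s$2) 0" using k by simp
        then have s2c: "s$2 = [:coeff (s$2) 0:]" by (rule const_of_deg0)
        have c0: "coeff (s$2) 0 \<noteq> 0" using \<open>s$2 \<noteq> 0\<close> s2c by (metis pCons_0_0)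
        have sv2: "sub_vec m1 m2 k s x $ 2 = coeff (s$2) 0" for x
        proof (cases x)
          case None then show ?thesis using k by (simp add: icoeff_def)
        next
          case (Some z)
          have "poly (s$2) z = poly [:coeff (s$2) 0:] z" by (subst s2c) (rule refl)
          then show ?thesis using Some by simp
        qed
        have disj: "?I \<inter> I1 = {}"
        proof (rule ccontr)
          assume "?I \<inter> I1 \<noteq> {}"
          then obtain i where i: "i \<in> ?I" "i \<in> I1" by blast
          then have "cline (sub_vec m1 m2 k s (pt z1 i)) = cline e1v"
            by (simp add: IL_def I1_def sub_fibre_def)
          then have "sub_vec m1 m2 k s (pt z1 i) $ 2 = 0" using cline_e1v ls_nz[OF L] by blast
          then show False using sv2 c0 by simp
        qed
        have IU: "?I \<subseteq> U" using IL_sub by (simp add: U_def)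
        have "I1 \<union> ?I \<noteq> U" using nR' L k by blast
        then have "?I \<subset> J1" using disj IU I1U by (auto simp: J1_def)
        then have "card ?I < n" unfolding n_def using fJ1 psubset_card_mono by blast
        then have cI: "real (card ?I) \<le> real n - 1" by linarith
        have "sum \<beta> ?I = t * real (card ?I)"
          using sb[of ?I] disj IU fU finite_subset by (metis Diff_triv)
        then have "betaI \<beta> ?I = 2 * (t * real (card ?I)) - (real_of_int e + 1/2)"
          using betaI_alt[OF IL_sub[of z1 m1 m2 F k s], of \<beta>] sU by simp
        also have "\<dots> \<le> 2 * (t * (real n - 1)) - (real_of_int e + 1/2)"
          using cI t4 by (simp add: mult_left_mono)
        also have "\<dots> = real_of_int e + 1/2 - 2 * t" using tn by (simp add: algebra_simps)
        also have "\<dots> < real_of_int e" using t4 by simp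
        finally show ?thesis using k by (simp add: e_def)
      qed
    qed
  qed
  then show ?thesis using ok by blast
qed

theorem lemma6p3:
  fixes z1 :: complex and m1 m2 :: int
  assumes "z1 \<noteq> 0" and "z1 \<noteq> 1" and "m2 \<le> m1"
  shows
   "(\<forall>F A. QPH z1 m1 m2 F A \<and> A \<noteq> 0 \<and> det A = 0 \<longrightarrow>
       (\<forall>k s. line_subbundle m1 m2 k s \<and> A *v s = 0 \<longrightarrow>
          ((\<forall>\<beta>. beta_ok \<beta> \<longrightarrow> \<not> stable z1 m1 m2 \<beta> F A) \<longleftrightarrow>
           - real (card ({1..4} - IL z1 m1 m2 F k s)) \<ge> real_of_int (m1 + m2 - 2 * k))))
    \<and> (\<forall>F. QPH z1 m1 m2 F 0 \<longrightarrow>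
       ((\<forall>\<beta>. beta_ok \<beta> \<longrightarrow> \<not> stable z1 m1 m2 \<beta> F 0) \<longleftrightarrow>
        (\<exists>s s'. line_subbundle m1 m2 m1 s \<and> line_subbundle m1 m2 m2 s' \<and>
           IL z1 m1 m2 F m1 s \<union> IL z1 m1 m2 F m2 s' = {1..4})))"
proof (intro conjI allI impI)
  fix F A k s
  assume h1: "QPH z1 m1 m2 F A \<and> A \<noteq> 0 \<and> det A = 0" and h2: "line_subbundle m1 m2 k s \<and> A *v s = 0"
  show "(\<forall>\<beta>. beta_ok \<beta> \<longrightarrow> \<not> stable z1 m1 m2 \<beta> F A) \<longleftrightarrow>
           - real (card ({1..4} - IL z1 m1 m2 F k s)) \<ge> real_of_int (m1 + m2 - 2 * k)"
    using part1[OF assms(1,2)] h1 h2 by blast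
next
  fix F assume Q: "QPH z1 m1 m2 F 0"
  show "(\<forall>\<beta>. beta_ok \<beta> \<longrightarrow> \<not> stable z1 m1 m2 \<beta> F 0) \<longleftrightarrow>
        (\<exists>s s'. line_subbundle m1 m2 m1 s \<and> line_subbundle m1 m2 m2 s' \<and>
           IL z1 m1 m2 F m1 s \<union> IL z1 m1 m2 F m2 s' = {1..4})"
  proof
    assume h: "\<forall>\<beta>. beta_ok \<beta> \<longrightarrow> \<not> stable z1 m1 m2 \<beta> F 0"
    show "\<exists>s s'. line_subbundle m1 m2 m1 s \<and> line_subbundle m1 m2 m2 s' \<and>
           IL z1 m1 m2 F m1 s \<union> IL z1 m1 m2 F m2 s' = {1..4}"
    proof (rule ccontr)
      assume nR: "\<not> ?thesis"
      have "\<exists>\<beta>. beta_ok \<beta> \<and> stable z1 m1 m2 \<beta> F 0"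
      proof (cases "m1 = m2")
        case True
        then show ?thesis using part2_e0[OF True Q nR] by blast
      next
        case False
        then have "m2 < m1" using assms(3) by simp
        then show ?thesis using part2_e1[OF assms(1,2) _ Q nR] by blast
      qed
      then show False using h by blast
    qed
  next
    assume "\<exists>s s'. line_subbundle m1 m2 m1 s \<and> line_subbundle m1 m2 m2 s' \<and>
           IL z1 m1 m2 F m1 s \<union> IL z1 m1 m2 F m2 s' = {1..4}"
    then show "\<forall>\<beta>. beta_ok \<beta> \<longrightarrow> \<not> stable z1 m1 m2 \<beta> F 0" using part2_if by blast
  qed
qed

end
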